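(* Let $n$ be an odd positive integer and let $A=S(n)$. If $\Omega(n)=1$ (i.e. $n$ is an odd prime), then $D_A(n)=3$. If $n$ is squarefree, every prime divisor of $n$ is at least $7$ and $\Omega(n)\geq 2$, then $D_A(n)=\Omega(n)+1$.
   Context: For $n\ge 2$, $\mathbb{Z}_n$ is the ring of integers mod $n$ and $U(n)$ its group of units. For a nonempty $A\subseteq \mathbb{Z}_n\setminus\{0\}$, a sequence $(x_1,\ldots,x_k)$ in $\mathbb{Z}_n$ is an $A$-weighted zero-sum sequence if there exist $a_1,\ldots,a_k\in A$ with $a_1x_1+\cdots+a_kx_k=0$. The $A$-weighted Davenport constant $D_A(n)$ is the least positive integer $k$ such that every sequence of length $k$ in $\mathbb{Z}_n$ has a (nonempty) subsequence which is an $A$-weighted zero-sum sequence. If $n=p_1^{r_1}\cdots p_k^{r_k}$ with distinct primes $p_i$, $\Omega(n)=r_1+\cdots+r_k$. For an odd prime $p$ dividing $n$ and $a\in U(n)$, $\left(\frac{a}{p}\right)$ denotes the Legendre symbol of the image of $a$ in $\mathbb{Z}_p$; for odd $n=p_1^{r_1}\cdots p_k^{r_k}$ the Jacobi symbol is $\left(\frac{a}{n}\right)=\prod_i\left(\frac{a}{p_i}\right)^{r_i}$, and $S(n)$ is the kernel of the homomorphism $U(n)\to\{1,-1\}$, $a\mapsto\left(\frac{a}{n}\right)$. *)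

theory Defs
  imports "HOL-Number_Theory.Number_Theory" "HOL-Computational_Algebra.Squarefree"
begin

text \<open>Elements of Z_n are represented by their residues 0..n-1 (type nat).\<close>

definition Omega :: "nat \<Rightarrow> nat" where
  "Omega n = (\<Sum>p\<in>prime_factors n. multiplicity p n)"

definition Jacobi :: "nat \<Rightarrow> nat \<Rightarrow> int" where
  "Jacobi a n = (\<Prod>p\<in>prime_factors n. Legendre (int a) (int p) ^ multiplicity p n)"

definition S_set :: "nat \<Rightarrow> nat set" where
  "S_set n = {a. a < n \<and> coprime a n \<and> Jacobi a n = 1}"

definition weighted_zero_sum :: "nat set \<Rightarrow> nat \<Rightarrow> nat list \<Rightarrow> nat set \<Rightarrow> bool" where
  "weighted_zero_sum A n xs I \<longleftrightarrow>
     (\<exists>a. (\<forall>i\<in>I. a i \<in> A) \<and> (\<Sum>i\<in>I. a i * xs ! i) mod n = 0)"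

definition has_weighted_zero_subseq :: "nat set \<Rightarrow> nat \<Rightarrow> nat list \<Rightarrow> bool" where
  "has_weighted_zero_subseq A n xs \<longleftrightarrow>
     (\<exists>I. I \<subseteq> {..<length xs} \<and> I \<noteq> {} \<and> weighted_zero_sum A n xs I)"

definition weighted_davenport :: "nat set \<Rightarrow> nat \<Rightarrow> nat" where
  "weighted_davenport A n = (LEAST k. k > 0 \<and>
     (\<forall>xs. length xs = k \<and> set xs \<subseteq> {..<n} \<longrightarrow> has_weighted_zero_subseq A n xs))"

end

theory Submission
  imports Defs
begin


lemma L_cong:
  fixes p :: nat
  assumes "[a = b] (mod int p)" shows "Legendre a p = Legendre b p"
  using assms unfolding Legendre_def QuadRes_def
  by (smt (verit) cong_sym cong_trans)

lemma L_zero: fixes p :: nat shows "Legendre a p = 0 \<longleftrightarrow> int p dvd a"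
  unfolding Legendre_def by (auto simp: cong_0_iff)

lemma L_vals: fixes p :: nat shows "Legendre a p = -1 \<or> Legendre a p = 0 \<or> Legendre a p = 1"
  unfolding Legendre_def by auto

lemma L_mult:
  fixes p :: nat
  assumes "prime p" "2 < p"
  shows "Legendre (a*b) p = Legendre a p * Legendre b p"
proof -
  have 1: "[Legendre (a*b) p = (a*b) ^ ((p - 1) div 2)] (mod int p)"
    using euler_criterion assms by blast
  have 2: "[Legendre a p * Legendre b p = a ^ ((p - 1) div 2) * b ^ ((p - 1) div 2)] (mod int p)"
    using euler_criterion assms cong_mult by blast
  have "[Legendre (a*b) p = Legendre a p * Legendre b p] (mod int p)"
    using 1 2 by (metis cong_sym cong_trans power_mult_distrib)
  then have d: "int p dvd Legendre (a*b) p - Legendre a p * Legendre b p"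
    by (simp add: cong_iff_dvd_diff)
  have b: "\<bar>Legendre (a*b) p - Legendre a p * Legendre b p\<bar> \<le> 2"
    using L_vals[of "a*b" p] L_vals[of a p] L_vals[of b p] by auto
  show ?thesis
  proof (rule ccontr)
    assume "\<not> ?thesis"
    then have "\<bar>int p\<bar> \<le> \<bar>Legendre (a*b) p - Legendre a p * Legendre b p\<bar>"
      using dvd_imp_le_int[OF _ d] by auto
    with b assms(2) show False by auto
  qed
qed

lemma L_one: fixes p :: nat shows "p > 1 \<Longrightarrow> Legendre 1 (int p) = 1"
  unfolding Legendre_def QuadRes_def cong_0_iff
  by (auto intro: exI[of _ 1] simp: zdvd1_eq)

lemma L_sq: fixes p :: nat and a :: int assumes "prime p" "\<not> int p dvd a" shows "Legendre (a^2) p = 1"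
proof -
  have pp: "prime (int p)" using assms by simp
  have "\<not> int p dvd a^2" using prime_dvd_power[OF pp] assms(2) by blast
  moreover have "QuadRes p (a^2)" unfolding QuadRes_def by (blast intro: cong_refl)
  ultimately show ?thesis unfolding Legendre_def cong_0_iff by simp
qed

lemma L_nonres:
  fixes p :: nat
  assumes "prime p" "2 < p"
  shows "\<exists>g. Legendre g p = -1"
proof (rule ccontr)
  assume "\<not> ?thesis"
  then have all: "\<forall>m \<in> {1..<int p}. QuadRes p m"
    by (auto simp: Legendre_def cong_0_iff zdvd_not_zless split: if_splits)
  define h where "h = (p - 1) div 2"
  have sub: "{1..<int p} \<subseteq> (\<lambda>x. x^2 mod int p) ` {1..int h}"
  proof
    fix m assume m: "m \<in> {1..<int p}"
    then obtain y where "[y^2 = m] (mod int p)" using all unfolding QuadRes_def by blast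
    then have y: "y^2 mod p = m" using m by (simp add: cong_def)
    define z where "z = y mod p"
    have zm: "z^2 mod p = m" using y by (simp add: z_def power_mod)
    have z0: "z \<noteq> 0" using zm m by auto
    have zr: "0 \<le> z" "z < p" using assms by (auto simp: z_def)
    show "m \<in> (\<lambda>x. x^2 mod int p) ` {1..int h}"
    proof (cases "z \<le> int h")
      case True then show ?thesis using zm z0 zr by force
    next
      case False
      have "(p - z)^2 = p*(p - 2*z) + z^2" by (simp add: power2_eq_square algebra_simps)
      then have pz: "(p - z)^2 mod p = m" using zm by simp
      have "odd p" using assms prime_odd_nat by auto
      then have "int p = 2 * int h + 1" unfolding h_def by presburger
      then have "p - z \<in> {1..int h}" using False zr by auto
      then show ?thesis using pz by force
    qed
  qed
  have "card {1..<int p} \<le> card {1..int h}"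
    using card_image_le[of "{1..int h}" "(\<lambda>x. x^2 mod int p)"] card_mono[OF _ sub] by force
  then show False using assms h_def by auto
qed



lemma pm_eq: "(a::int) \<in> {-1,0,1} \<Longrightarrow> b \<in> {-1,0,1} \<Longrightarrow> a * b = 1 \<Longrightarrow> a = b"
  by auto

lemma L_pm: fixes p :: nat shows "\<not> int p dvd a \<Longrightarrow> Legendre a p = 1 \<or> Legendre a p = -1"
  using L_vals[of a p] L_zero[of a p] by auto

lemma L_inv:
  fixes p :: nat and y :: int
  assumes "prime p" "2 < p" "\<not> int p dvd y"
  shows "\<exists>i. [y*i = 1] (mod int p) \<and> Legendre i p = Legendre y p"
proof -
  have "prime (int p)" using assms by auto
  then have "coprime (int p) y" using assms prime_imp_coprime by blast
  then obtain i where i: "[y*i = 1] (mod int p)"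
    using cong_solve_coprime_int[of y "int p"] by (auto simp: coprime_commute)
  have "Legendre (y*i) p = 1" using L_cong[OF i] L_one assms prime_gt_1_nat by auto
  then have "Legendre y p * Legendre i p = 1" using L_mult assms by auto
  then have "Legendre i p = Legendre y p"
    using pm_eq[of "Legendre y p" "Legendre i p"] L_vals[of y p] L_vals[of i p] by auto
  then show ?thesis using i by blast
qed

lemma L_natlt:
  fixes p m :: nat
  assumes "0 < m" "m < p"
  shows "\<not> int p dvd int m"
proof
  assume "int p dvd int m"
  then have "p dvd m" by simp
  then show False using assms by (auto dest: dvd_imp_le)
qed

lemma L_mod_nat:
  fixes p :: nat and g :: int
  assumes "p > 0"
  shows "Legendre g p = Legendre (int (nat (g mod int p))) p \<and> nat (g mod int p) < p"
proof -
  have "[g = g mod int p] (mod int p)" by (simp add: cong_def)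
  moreover have "int (nat (g mod int p)) = g mod int p" using assms by simp
  ultimately show ?thesis using L_cong assms by (auto simp: nat_less_iff)
qed

lemma F2:
  fixes p :: nat
  assumes "prime p" "2 < p"
  shows "\<exists>r. Legendre r p = 1 \<and> Legendre (r+1) p = -1"
proof (rule ccontr)
  assume "\<not> ?thesis"
  then have H: "\<And>r. Legendre r p = 1 \<Longrightarrow> Legendre (r+1) p \<noteq> -1" by blast
  have all: "0 < m \<Longrightarrow> m < p \<Longrightarrow> Legendre (int m) p = 1" for m
  proof (induction m)
    case 0 then show ?case by simp
  next
    case (Suc m)
    show ?case
    proof (cases "m = 0")
      case True then show ?thesis using L_one assms by simp
    next
      case False
      then have "Legendre (int m) p = 1" using Suc by simp
      then have "Legendre (int m + 1) p \<noteq> -1" using H by blast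
      moreover have "\<not> int p dvd int (Suc m)" using L_natlt Suc by blast
      ultimately show ?thesis using L_pm by (metis of_nat_Suc add.commute)
    qed
  qed
  obtain g where g: "Legendre g p = -1" using L_nonres assms by blast
  define m where "m = nat (g mod int p)"
  have m: "Legendre (int m) p = -1" "m < p" using L_mod_nat[of p g] g assms unfolding m_def by auto
  have "m \<noteq> 0"
  proof
    assume "m = 0"
    then show False using m(1) L_zero[of 0 p] by simp
  qed
  then show False using all[of m] m by simp
qed

lemma F3:
  fixes p :: nat
  assumes "prime p" "7 \<le> p"
  shows "\<exists>r. Legendre r p = -1 \<and> Legendre (r+1) p = 1"
proof (rule ccontr)
  assume "\<not> ?thesis"
  then have H: "\<And>r. Legendre r p = -1 \<Longrightarrow> Legendre (r+1) p \<noteq> 1" by blast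
  have p2: "2 < p" using assms by auto
  obtain g where g: "Legendre g p = -1" using L_nonres assms p2 by blast
  define m where "m = nat (g mod int p)"
  have m: "Legendre (int m) p = -1" "m < p" using L_mod_nat[of p g] g assms unfolding m_def by auto
  have "m \<noteq> 0"
  proof
    assume "m = 0"
    then show False using m(1) L_zero[of 0 p] by simp
  qed
  define m0 where "m0 = (LEAST m. 0 < m \<and> m < p \<and> Legendre (int m) p = -1)"
  have ex: "0 < m \<and> m < p \<and> Legendre (int m) p = -1" using m \<open>m \<noteq> 0\<close> by auto
  have m0: "0 < m0" "m0 < p" "Legendre (int m0) p = -1"
    using LeastI[of "\<lambda>m. 0 < m \<and> m < p \<and> Legendre (int m) p = -1", OF ex] unfolding m0_def by auto
  have below: "0 < k \<Longrightarrow> k < m0 \<Longrightarrow> Legendre (int k) p = 1" for k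
  proof -
    assume k: "0 < k" "k < m0"
    then have "\<not> (0 < k \<and> k < p \<and> Legendre (int k) p = -1)"
      using not_less_Least[of k "\<lambda>m. 0 < m \<and> m < p \<and> Legendre (int m) p = -1"] unfolding m0_def by blast
    then show ?thesis using k m0 L_pm[of p "int k"] L_natlt[of k p] by auto
  qed
  have up: "m0 + i < p \<Longrightarrow> Legendre (int (m0 + i)) p = -1" for i
  proof (induction i)
    case 0 then show ?case using m0 by simp
  next
    case (Suc i)
    then have "Legendre (int (m0 + i)) p = -1" by simp
    then have h1: "Legendre (int (m0 + i) + 1) p \<noteq> 1" using H by blast
    have nd: "\<not> int p dvd int (m0 + Suc i)" using L_natlt[of "m0 + Suc i" p] Suc.prems by simp
    have e: "int (m0 + Suc i) = int (m0 + i) + 1" by simp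
    have "Legendre (int (m0 + Suc i)) p \<noteq> 1" unfolding e by (rule h1)
    then show ?case using L_pm[OF nd] by blast
  qed
  have above: "m0 \<le> k \<Longrightarrow> k < p \<Longrightarrow> Legendre (int k) p = -1" for k
    using up[of "k - m0"] by simp
  have Lm1: "Legendre (-1) p = -1"
  proof -
    have "[-1 = int (p - 1)] (mod int p)" using p2 by (simp add: cong_iff_dvd_diff of_nat_diff)
    then show ?thesis using L_cong above[of "p - 1"] m0 by auto
  qed
  have "m0 \<ge> 2" using m0 L_one[of p] p2 by (cases "m0 = 1") auto
  have a1: "Legendre (int (p - m0)) p = 1"
  proof -
    have "int (p - m0) = (-1) * int m0 + int p" using m0 by simp
    then have "[int (p - m0) = (-1) * int m0] (mod int p)" by (simp add: cong_iff_dvd_diff)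
    then have "Legendre (int (p - m0)) p = Legendre ((-1) * int m0) p" by (rule L_cong)
    also have "\<dots> = Legendre (-1) p * Legendre (int m0) p" by (rule L_mult[OF assms(1) p2])
    finally have "Legendre (int (p - m0)) p = Legendre (-1) p * Legendre (int m0) p" .
    then show ?thesis using Lm1 m0 by simp
  qed
  have c1: "p - m0 < m0" using above[of "p - m0"] a1 m0 by (cases "m0 \<le> p - m0") auto
  have a2: "Legendre (int (p - (m0 - 1))) p = -1"
  proof -
    have "int (p - (m0 - 1)) = (-1) * int (m0 - 1) + int p" using m0 by simp
    then have "[int (p - (m0 - 1)) = (-1) * int (m0 - 1)] (mod int p)" by (simp add: cong_iff_dvd_diff)
    then have "Legendre (int (p - (m0 - 1))) p = Legendre ((-1) * int (m0 - 1)) p" by (rule L_cong)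
    also have "\<dots> = Legendre (-1) p * Legendre (int (m0 - 1)) p" by (rule L_mult[OF assms(1) p2])
    finally have "Legendre (int (p - (m0 - 1))) p = Legendre (-1) p * Legendre (int (m0 - 1)) p" .
    then show ?thesis using Lm1 below[of "m0 - 1"] \<open>m0 \<ge> 2\<close> by simp
  qed
  have c2: "m0 \<le> p - (m0 - 1)" using below[of "p - (m0 - 1)"] a2 m0 by (cases "m0 \<le> p - (m0 - 1)") auto
  have eq: "2 * m0 = p + 1" using c1 c2 m0 by linarith
  have "Legendre 2 p = 1" using below[of 2] eq assms by simp
  then have "Legendre (2 * int (m0 - 1)) p = 1"
    using L_mult[of p 2 "int (m0 - 1)"] below[of "m0 - 1"] \<open>m0 \<ge> 2\<close> assms p2 by simp
  moreover have "2 * int (m0 - 1) = int (p - 1)" using eq \<open>m0 \<ge> 2\<close> by simp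
  ultimately show False using above[of "p - 1"] m0 by simp
qed

lemma F1:
  fixes p :: nat
  assumes "prime p" "7 \<le> p"
  shows "\<exists>r. Legendre r p = 1 \<and> Legendre (r+1) p = 1"
proof -
  have p2: "2 < p" using assms by auto
  have nd: "\<not> int p dvd int k" if "0 < k" "k < 7" for k using L_natlt[of k p] that assms by auto
  have sq: "Legendre (int k ^ 2) p = 1" if "0 < k" "k < 7" for k
    using L_sq[OF assms(1) nd[OF that]] .
  have L1: "Legendre 1 p = 1" using L_one p2 by simp
  have L4: "Legendre 4 p = 1" using sq[of 2] by simp
  have L9: "Legendre 9 p = 1" using sq[of 3] by simp
  show ?thesis
  proof (cases "Legendre 2 p = 1")
    case True then show ?thesis using L1 by (intro exI[of _ 1]) simp
  next
    case F2: False
    show ?thesis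
    proof (cases "Legendre 5 p = 1")
      case True then show ?thesis using L4 by (intro exI[of _ 4]) simp
    next
      case False
      have "Legendre 2 p = -1" using F2 L_pm[OF nd[of 2]] by simp
      moreover have "Legendre 5 p = -1" using False L_pm[OF nd[of 5]] by simp
      ultimately have "Legendre 10 p = 1" using L_mult[OF assms(1) p2, of 2 5] by simp
      then show ?thesis using L9 by (intro exI[of _ 9]) simp
    qed
  qed
qed

lemma F4:
  fixes p :: nat
  assumes "prime p" "7 \<le> p"
  shows "\<exists>r. Legendre r p = -1 \<and> Legendre (r+1) p = -1"
proof -
  have p2: "2 < p" using assms by auto
  obtain r where r: "Legendre r p = -1" "Legendre (r+1) p = 1" using F3 assms by blast
  have "Legendre r p \<noteq> 0" using r by simp
  then have nr: "\<not> int p dvd r" using L_zero by blast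
  obtain i where i: "[r*i = 1] (mod int p)" "Legendre i p = Legendre r p"
    using L_inv[OF assms(1) p2 nr] by blast
  have "[r*i + r = 1 + r] (mod int p)" using cong_add[OF i(1) cong_refl] .
  moreover have "r * (i + 1) = r*i + r" by (simp add: algebra_simps)
  ultimately have "[r * (i + 1) = r + 1] (mod int p)" by (simp add: add.commute)
  then have "Legendre (r * (i + 1)) p = Legendre (r + 1) p" by (rule L_cong)
  then have "Legendre r p * Legendre (i+1) p = 1" using L_mult[OF assms(1) p2] r by simp
  then have "Legendre (i+1) p = -1" using r by simp
  then show ?thesis using i r by auto
qed

lemma Fall:
  fixes p :: nat
  assumes "prime p" "7 \<le> p" "\<sigma> \<in> {-1,1}" "\<tau> \<in> {-1,1}"
  shows "\<exists>r. Legendre r p = \<sigma> \<and> Legendre (r+1) p = \<tau>"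
proof -
  have p2: "2 < p" using assms by auto
  show ?thesis
  proof (cases "\<sigma> = 1")
    case True
    then show ?thesis using assms(4) F1[OF assms(1,2)] F2[OF assms(1) p2] by (cases "\<tau> = 1") auto
  next
    case False
    then have "\<sigma> = -1" using assms(3) by auto
    then show ?thesis using assms(4) F3[OF assms(1,2)] F4[OF assms(1,2)] by (cases "\<tau> = 1") auto
  qed
qed



lemma L_rep:
  fixes p :: nat
  assumes "prime p" "2 < p" "e \<in> {-1,1}"
  shows "\<exists>b. Legendre b p = e"
proof (cases "e = 1")
  case True then show ?thesis using L_one[of p] assms by auto
next
  case False then show ?thesis using L_nonres[OF assms(1,2)] assms(3) by auto
qed

lemma pm1_cases: "(x::int) \<in> {-1,1} \<Longrightarrow> x = 1 \<or> x = -1" by auto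

lemma Lemma2:
  fixes p :: nat and y1 y2 c e1 e2 :: int
  assumes p: "prime p" "7 \<le> p" and y: "\<not> int p dvd y1" "\<not> int p dvd y2" "\<not> int p dvd c"
    and e: "e1 \<in> {-1,1}" "e2 \<in> {-1,1}"
  shows "\<exists>b1 b2. Legendre b1 p = e1 \<and> Legendre b2 p = e2 \<and> int p dvd (b1*y1 + b2*y2 - c)"
proof -
  have p2: "2 < p" using p by auto
  have Lc: "Legendre c p = 1 \<or> Legendre c p = -1" using L_pm y by blast
  have Ly1: "Legendre y1 p = 1 \<or> Legendre y1 p = -1" using L_pm y by blast
  have Ly2: "Legendre y2 p = 1 \<or> Legendre y2 p = -1" using L_pm y by blast
  define \<tau> where "\<tau> = e1 * Legendre c p * Legendre y1 p"
  define \<sigma> where "\<sigma> = e2 * Legendre c p * \<tau> * Legendre y2 p"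
  have t: "\<tau> = 1 \<or> \<tau> = -1" unfolding \<tau>_def using e Lc Ly1 by auto
  have s: "\<sigma> = 1 \<or> \<sigma> = -1" unfolding \<sigma>_def using e Lc Ly2 t by auto
  obtain r where r: "Legendre r p = \<sigma>" "Legendre (r+1) p = \<tau>"
    using Fall[OF p, of \<sigma> \<tau>] s t by auto
  have "Legendre (r+1) p \<noteq> 0" using r t by auto
  then have nr: "\<not> int p dvd (r+1)" using L_zero by blast
  obtain s1 where s1: "[(r+1)*s1 = 1] (mod int p)" "Legendre s1 p = Legendre (r+1) p"
    using L_inv[OF p(1) p2 nr] by blast
  obtain i1 where i1: "[y1*i1 = 1] (mod int p)" "Legendre i1 p = Legendre y1 p"
    using L_inv[OF p(1) p2 y(1)] by blast
  obtain i2 where i2: "[y2*i2 = 1] (mod int p)" "Legendre i2 p = Legendre y2 p"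
    using L_inv[OF p(1) p2 y(2)] by blast
  define b1 where "b1 = c * s1 * i1"
  define b2 where "b2 = c * s1 * r * i2"
  have d1: "int p dvd y1*i1 - 1" using i1(1) by (simp add: cong_iff_dvd_diff)
  have d2: "int p dvd y2*i2 - 1" using i2(1) by (simp add: cong_iff_dvd_diff)
  have d3: "int p dvd (r+1)*s1 - 1" using s1(1) by (simp add: cong_iff_dvd_diff)
  have eq: "b1*y1 + b2*y2 - c = (c*s1) * (y1*i1 - 1) + (c*s1*r) * (y2*i2 - 1) + c * ((r+1)*s1 - 1)"
    unfolding b1_def b2_def by (simp add: algebra_simps)
  have dv: "int p dvd (b1*y1 + b2*y2 - c)"
    unfolding eq using d1 d2 d3 by (intro dvd_add dvd_mult) auto
  have Lb1: "Legendre b1 p = Legendre c p * \<tau> * Legendre y1 p"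
    unfolding b1_def using L_mult[OF p(1) p2] s1(2) i1(2) r(2) by simp
  have Lb2: "Legendre b2 p = Legendre c p * \<tau> * \<sigma> * Legendre y2 p"
    unfolding b2_def using L_mult[OF p(1) p2] s1(2) i2(2) r by simp
  have "Legendre b1 p = e1" unfolding Lb1 \<tau>_def using Lc Ly1 e by auto
  moreover have "Legendre b2 p = e2" unfolding Lb2 \<sigma>_def \<tau>_def using Lc Ly1 Ly2 e by auto
  ultimately show ?thesis using dv by blast
qed

lemma Lemma3:
  fixes p :: nat and y1 y2 y3 c e1 e2 e3 :: int
  assumes p: "prime p" "7 \<le> p" and y: "\<not> int p dvd y1" "\<not> int p dvd y2" "\<not> int p dvd y3"
    and e: "e1 \<in> {-1,1}" "e2 \<in> {-1,1}" "e3 \<in> {-1,1}"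
  shows "\<exists>b1 b2 b3. Legendre b1 p = e1 \<and> Legendre b2 p = e2 \<and> Legendre b3 p = e3
     \<and> int p dvd (b1*y1 + b2*y2 + b3*y3 - c)"
proof -
  have p2: "2 < p" using p by auto
  have pp: "prime (int p)" using p by simp
  obtain g where g: "Legendre g p = e3" using L_rep[OF p(1) p2 e(3)] by blast
  have ng: "\<not> int p dvd g" using g e(3) L_zero[of g p] by auto
  have L4: "Legendre 4 p = 1" using L_sq[OF p(1), of 2] L_natlt[of 2 p] p by simp
  obtain b3 where b3: "Legendre b3 p = e3" "\<not> int p dvd (c - b3*y3)"
  proof (cases "int p dvd (c - g*y3)")
    case False then show ?thesis using that g by blast
  next
    case True
    have n3: "\<not> int p dvd 3" using L_natlt[of 3 p] p by simp
    have "\<not> int p dvd 3 * (g * y3)"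
      using n3 ng y(3) prime_dvd_mult_iff[OF pp] by simp
    have eq3: "3 * (g * y3) = (c - g*y3) - (c - (4*g)*y3)" by (simp add: algebra_simps)
    have "\<not> int p dvd (c - (4*g)*y3)"
    proof
      assume "int p dvd (c - (4*g)*y3)"
      then have "int p dvd 3 * (g * y3)" unfolding eq3 using True by (rule dvd_diff[rotated])
      then show False using \<open>\<not> int p dvd 3 * (g * y3)\<close> by blast
    qed
    moreover have "Legendre (4*g) p = e3" using L_mult[OF p(1) p2] L4 g by simp
    ultimately show ?thesis using that by blast
  qed
  obtain b1 b2 where b: "Legendre b1 p = e1" "Legendre b2 p = e2" "int p dvd (b1*y1 + b2*y2 - (c - b3*y3))"
    using Lemma2[OF p y(1,2) b3(2) e(1,2)] by blast
  have "b1*y1 + b2*y2 - (c - b3*y3) = b1*y1 + b2*y2 + b3*y3 - c" by simp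
  then show ?thesis using b b3 by metis
qed



lemma card_ge3_obtain:
  assumes "finite A" "card A \<ge> 3"
  obtains u v w where "u \<in> A" "v \<in> A" "w \<in> A" "u \<noteq> v" "u \<noteq> w" "v \<noteq> w"
proof -
  obtain B where B: "B \<subseteq> A" "card B = 3" using obtain_subset_with_card_n[of 3 A] assms by auto
  then obtain u v w where "B = {u,v,w}" "u \<noteq> v" "u \<noteq> w" "v \<noteq> w" using card_3_iff[of B] by auto
  then show ?thesis using that B by auto
qed

lemma PP:
  fixes p :: nat and I :: "nat set" and y \<sigma> :: "nat \<Rightarrow> int"
  assumes p: "prime p" "7 \<le> p" and fin: "finite I"
    and t1: "card {j\<in>I. \<not> int p dvd y j} \<noteq> 1"
    and sg: "\<forall>j\<in>I. \<sigma> j \<in> {-1,1}"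
    and t2: "card {j\<in>I. \<not> int p dvd y j} = 2 \<longrightarrow>
       (\<Prod>j\<in>{j\<in>I. \<not> int p dvd y j}. \<sigma> j) = Legendre (- (\<Prod>j\<in>{j\<in>I. \<not> int p dvd y j}. y j)) p"
  shows "\<exists>b. (\<forall>j\<in>I. Legendre (b j) p = \<sigma> j) \<and> int p dvd (\<Sum>j\<in>I. b j * y j)"
proof -
  have p2: "2 < p" using p by auto
  define Sp where "Sp = {j\<in>I. \<not> int p dvd y j}"
  have finS: "finite Sp" using fin unfolding Sp_def by auto
  have SpI: "Sp \<subseteq> I" unfolding Sp_def by auto
  have "\<forall>e\<in>{-1,1::int}. \<exists>b. Legendre b p = e" using L_rep[OF p(1) p2] by blast
  then obtain R where R: "\<And>e. e \<in> {-1,1::int} \<Longrightarrow> Legendre (R e) p = e" by metis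
  have zero: "int p dvd y j" if "j \<in> I - Sp" for j using that unfolding Sp_def by auto
  consider "card Sp = 0" | "card Sp = 2" | "card Sp \<ge> 3" using t1 unfolding Sp_def by linarith
  then show ?thesis
  proof cases
    case 1
    then have "Sp = {}" using finS by auto
    define b where "b = (\<lambda>j. R (\<sigma> j))"
    have "int p dvd (\<Sum>j\<in>I. b j * y j)"
      using zero \<open>Sp = {}\<close> by (intro dvd_sum) auto
    moreover have "\<forall>j\<in>I. Legendre (b j) p = \<sigma> j" using R sg unfolding b_def by auto
    ultimately show ?thesis by blast
  next
    case 2
    then obtain u v where uv: "Sp = {u,v}" "u \<noteq> v" using card_2_iff[of Sp] by auto
    have uvI: "u \<in> I" "v \<in> I" using uv SpI by auto
    have nu: "\<not> int p dvd y u" and nv: "\<not> int p dvd y v" using uv unfolding Sp_def by auto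
    have cond: "\<sigma> u * \<sigma> v = Legendre (- (y u * y v)) p"
      using t2 2 uv unfolding Sp_def[symmetric] by simp
    obtain iv where iv: "[y v * iv = 1] (mod int p)" "Legendre iv p = Legendre (y v) p"
      using L_inv[OF p(1) p2 nv] by blast
    define bu where "bu = R (\<sigma> u)"
    define bv where "bv = (-1) * bu * y u * iv"
    define b where "b = (\<lambda>j. if j = v then bv else R (\<sigma> j))"
    have Lbu: "Legendre bu p = \<sigma> u" using R sg uvI unfolding bu_def by auto
    have Lm: "Legendre (- (y u * y v)) p = Legendre (-1) p * Legendre (y u) p * Legendre (y v) p"
      using L_mult[OF p(1) p2, of "-1" "y u * y v"] L_mult[OF p(1) p2, of "y u" "y v"] by simp
    have Lbv: "Legendre bv p = Legendre (-1) p * \<sigma> u * Legendre (y u) p * Legendre (y v) p"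
    proof -
      have "Legendre bv p = Legendre (-1) p * Legendre bu p * Legendre (y u) p * Legendre iv p"
        unfolding bv_def by (simp only: L_mult[OF p(1) p2])
      then show ?thesis using Lbu iv(2) by simp
    qed
    have su: "\<sigma> u = 1 \<or> \<sigma> u = -1" using sg uvI by auto
    have "Legendre bv p = \<sigma> v"
    proof -
      have "Legendre bv p = \<sigma> u * (\<sigma> u * \<sigma> v)" unfolding Lbv cond Lm by (simp add: algebra_simps)
      then show ?thesis using su by auto
    qed
    then have Lb: "\<forall>j\<in>I. Legendre (b j) p = \<sigma> j" using R sg unfolding b_def by auto
    have s1: "(\<Sum>j\<in>I. b j * y j) = (\<Sum>j\<in>I - Sp. b j * y j) + (\<Sum>j\<in>Sp. b j * y j)"
      using sum.subset_diff[OF SpI fin] by simp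
    have d1: "int p dvd (\<Sum>j\<in>I - Sp. b j * y j)" using zero by (intro dvd_sum) auto
    have "(\<Sum>j\<in>Sp. b j * y j) = bu * y u + bv * y v"
      using uv unfolding b_def bu_def by simp
    also have "\<dots> = (-1) * bu * y u * (y v * iv - 1)" unfolding bv_def by (simp add: algebra_simps)
    finally have d2: "int p dvd (\<Sum>j\<in>Sp. b j * y j)"
      using iv(1) by (simp add: cong_iff_dvd_diff)
    show ?thesis using Lb s1 d1 d2 by (metis dvd_add)
  next
    case 3
    then obtain u v w where uvw: "u \<in> Sp" "v \<in> Sp" "w \<in> Sp" "u \<noteq> v" "u \<noteq> w" "v \<noteq> w"
      using card_ge3_obtain[OF finS] by blast
    have uvwI: "u \<in> I" "v \<in> I" "w \<in> I" using uvw SpI by auto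
    have ny: "\<not> int p dvd y u" "\<not> int p dvd y v" "\<not> int p dvd y w" using uvw unfolding Sp_def by auto
    define T where "T = {u,v,w}"
    have TI: "T \<subseteq> I" using uvwI unfolding T_def by auto
    define R0 where "R0 = (\<Sum>j\<in>I - T. R (\<sigma> j) * y j)"
    obtain b1 b2 b3 where bb: "Legendre b1 p = \<sigma> u" "Legendre b2 p = \<sigma> v" "Legendre b3 p = \<sigma> w"
      "int p dvd (b1 * y u + b2 * y v + b3 * y w - (- R0))"
      using Lemma3[OF p ny, of "\<sigma> u" "\<sigma> v" "\<sigma> w" "- R0"] sg uvwI by blast
    define b where "b = (\<lambda>j. if j = u then b1 else if j = v then b2 else if j = w then b3 else R (\<sigma> j))"
    have Lb: "\<forall>j\<in>I. Legendre (b j) p = \<sigma> j" using R sg bb unfolding b_def by auto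
    have s1: "(\<Sum>j\<in>I. b j * y j) = (\<Sum>j\<in>I - T. b j * y j) + (\<Sum>j\<in>T. b j * y j)"
      using sum.subset_diff[OF TI fin] by simp
    have s2: "(\<Sum>j\<in>I - T. b j * y j) = R0"
      unfolding R0_def by (rule sum.cong) (auto simp: b_def T_def)
    have s3: "(\<Sum>j\<in>T. b j * y j) = b1 * y u + b2 * y v + b3 * y w"
      unfolding T_def b_def using uvw by simp
    have "(\<Sum>j\<in>I. b j * y j) = b1 * y u + b2 * y v + b3 * y w - (- R0)"
      unfolding s1 s2 s3 by simp
    then show ?thesis using Lb bb(4) by metis
  qed
qed

lemma comb:
  fixes P :: "'a set" and D :: "nat set" and Sp :: "'a \<Rightarrow> nat \<Rightarrow> bool"
  assumes "finite P" "finite D" "card D > card P"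
  shows "\<exists>I\<subseteq>D. I \<noteq> {} \<and> (\<forall>p\<in>P. card {j\<in>I. Sp p j} \<noteq> 1)"
  using assms
proof (induction "card P" arbitrary: P D rule: less_induct)
  case less
  show ?case
  proof (cases "\<forall>p\<in>P. card {j\<in>D. Sp p j} \<noteq> 1")
    case True
    have "D \<noteq> {}" using less.prems by auto
    then show ?thesis using True by blast
  next
    case False
    then obtain p0 where p0: "p0 \<in> P" "card {j\<in>D. Sp p0 j} = 1" by blast
    then obtain j0 where j0: "{j\<in>D. Sp p0 j} = {j0}" using card_1_singletonE by blast
    have j0D: "j0 \<in> D" using j0 by auto
    have "card P > 0" using p0 less.prems(1) card_gt_0_iff by blast
    then have c1: "card (P - {p0}) < card P" using p0 less.prems by (simp add: card_Diff1_less)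
    have c2: "card (D - {j0}) > card (P - {p0})"
      using less.prems p0 j0D \<open>card P > 0\<close> by (simp add: card_Diff_singleton)
    obtain I where I: "I \<subseteq> D - {j0}" "I \<noteq> {}" "\<forall>p\<in>P - {p0}. card {j\<in>I. Sp p j} \<noteq> 1"
      using less.hyps[OF c1 _ _ c2] less.prems by auto
    have "{j\<in>I. Sp p0 j} = {}" using I(1) j0 by auto
    have "\<forall>p\<in>P. card {j\<in>I. Sp p j} \<noteq> 1"
    proof
      fix p assume "p \<in> P"
      show "card {j\<in>I. Sp p j} \<noteq> 1"
      proof (cases "p = p0")
        case True then show ?thesis using \<open>{j\<in>I. Sp p0 j} = {}\<close> card.empty by (metis zero_neq_one)
      next
        case False then show ?thesis using I(3) \<open>p \<in> P\<close> by blast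
      qed
    qed
    then show ?thesis using I by blast
  qed
qed



lemma sqf_mult1:
  fixes n :: nat
  assumes "squarefree n" "p \<in> prime_factors n"
  shows "multiplicity p n = 1"
proof -
  have "n \<noteq> 0" using assms(1) by (metis not_squarefree_0)
  then show ?thesis using squarefree_factorial_semiring'[of n] assms by blast
qed

lemma Omega_sqf:
  fixes n :: nat
  assumes "squarefree n"
  shows "Omega n = card (prime_factors n)"
  unfolding Omega_def using sqf_mult1[OF assms] by simp

lemma sqf_dvd:
  fixes n m :: nat
  assumes "squarefree n" "\<forall>p\<in>prime_factors n. p dvd m"
  shows "n dvd m"
proof (cases "m = 0")
  case True then show ?thesis by simp
next
  case False
  have n0: "n \<noteq> 0" using assms(1) by (metis not_squarefree_0)
  show ?thesis
  proof (rule multiplicity_le_imp_dvd[OF n0])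
    fix q :: nat assume q: "prime q"
    show "multiplicity q n \<le> multiplicity q m"
    proof (cases "q \<in> prime_factors n")
      case True
      then have "multiplicity q n = 1" using sqf_mult1 assms by blast
      moreover have "q dvd m" using True assms by blast
      then have "multiplicity q m > 0" using False q multiplicity_gt_zero_iff[of m q] prime_gt_1_nat[OF q] by auto
      ultimately show ?thesis by simp
    next
      case False
      then have "\<not> q dvd n" using q n0 in_prime_factors_iff by blast
      then have "multiplicity q n = 0" by (rule not_dvd_imp_multiplicity_0)
      then show ?thesis by simp
    qed
  qed
qed

lemma coprime_from_pf:
  fixes n m :: nat
  assumes "n \<noteq> 0" "\<forall>p\<in>prime_factors n. \<not> p dvd m"
  shows "coprime m n"
proof (rule ccontr)
  assume "\<not> coprime m n"
  then have g1: "gcd m n \<noteq> 1" using coprime_iff_gcd_eq_1 by blast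
  obtain q where q: "prime q" "q dvd gcd m n" using prime_factor_nat[OF g1] by blast
  have qm: "q dvd m" using q(2) gcd_dvd1 dvd_trans by blast
  have qn: "q dvd n" using q(2) gcd_dvd2 dvd_trans by blast
  have "q \<in> prime_factors n" using q(1) qn assms(1) in_prime_factors_iff by blast
  then show False using assms(2) qm by blast
qed

lemma assemble:
  fixes n :: nat and xs :: "nat list" and I :: "nat set" and B :: "nat \<Rightarrow> nat \<Rightarrow> int"
  assumes sq: "squarefree n"
    and I: "I \<subseteq> {..<length xs}" "I \<noteq> {}"
    and Bu: "\<forall>p\<in>prime_factors n. \<forall>j\<in>I. \<not> int p dvd B p j"
    and Bs: "\<forall>p\<in>prime_factors n. int p dvd (\<Sum>j\<in>I. B p j * int (xs!j))"
    and Bl: "\<forall>j\<in>I. (\<Prod>p\<in>prime_factors n. Legendre (B p j) (int p)) = 1"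
  shows "has_weighted_zero_subseq (S_set n) n xs"
proof -
  define P where "P = prime_factors n"
  have n0: "n \<noteq> 0" using sq by (metis not_squarefree_0)
  have finP: "finite P" unfolding P_def by simp
  have primeP: "\<And>p. p \<in> P \<Longrightarrow> prime p" unfolding P_def by auto
  have dvdP: "\<And>p. p \<in> P \<Longrightarrow> p dvd n" unfolding P_def by auto
  have cop: "\<forall>p\<in>P. \<forall>q\<in>P. p \<noteq> q \<longrightarrow> coprime p q"
    using primeP primes_coprime by blast
  have "\<forall>j. \<exists>x. \<forall>p\<in>P. [x = nat (B p j mod int p)] (mod p)"
  proof
    fix j show "\<exists>x. \<forall>p\<in>P. [x = nat (B p j mod int p)] (mod p)"
      using chinese_remainder_nat[OF finP cop, of "\<lambda>p. nat (B p j mod int p)"] by blast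
  qed
  then obtain f where f: "\<And>j. \<forall>p\<in>P. [f j = nat (B p j mod int p)] (mod p)"
    using choice[of "\<lambda>j x. \<forall>p\<in>P. [x = nat (B p j mod int p)] (mod p)"] by blast
  define a where "a = (\<lambda>j. f j mod n)"
  have key: "[int (a j) = B p j] (mod int p)" if "p \<in> P" for p j
  proof -
    have pp: "p > 0" using primeP[OF that] prime_gt_0_nat by blast
    have "[a j = f j] (mod p)" unfolding a_def cong_def using dvdP[OF that] by (simp add: mod_mod_cancel)
    moreover have "[f j = nat (B p j mod int p)] (mod p)" using f that by blast
    ultimately have "[a j = nat (B p j mod int p)] (mod p)" by (rule cong_trans)
    then have "[int (a j) = int (nat (B p j mod int p))] (mod int p)" using cong_int_iff by blast
    moreover have "int (nat (B p j mod int p)) = B p j mod int p" using pp by simp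
    ultimately have "[int (a j) = B p j mod int p] (mod int p)" by simp
    moreover have "[B p j mod int p = B p j] (mod int p)" by (simp add: cong_def)
    ultimately show ?thesis by (rule cong_trans)
  qed
  have La: "Legendre (int (a j)) p = Legendre (B p j) p" if "p \<in> P" for p j
    using L_cong[OF key[OF that]] .
  have ndvd: "\<not> p dvd a j" if "p \<in> P" "j \<in> I" for p j
  proof
    assume "p dvd a j"
    then have "int p dvd int (a j)" by simp
    then have "Legendre (int (a j)) p = 0" using L_zero by blast
    then have "Legendre (B p j) p = 0" using La[OF that(1)] by simp
    then show False using L_zero Bu that unfolding P_def by blast
  qed
  have inS: "a j \<in> S_set n" if "j \<in> I" for j
  proof -
    have "a j < n" unfolding a_def using n0 by simp
    moreover have "coprime (a j) n" using coprime_from_pf[OF n0] ndvd that unfolding P_def by blast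
    moreover have "Jacobi (a j) n = 1"
    proof -
      have "Jacobi (a j) n = (\<Prod>p\<in>P. Legendre (int (a j)) (int p))"
        unfolding Jacobi_def P_def using sqf_mult1[OF sq] by (intro prod.cong) auto
      also have "\<dots> = (\<Prod>p\<in>P. Legendre (B p j) (int p))" using La by (intro prod.cong) auto
      also have "\<dots> = 1" using Bl that unfolding P_def by blast
      finally show ?thesis .
    qed
    ultimately show ?thesis unfolding S_set_def by blast
  qed
  have "n dvd (\<Sum>i\<in>I. a i * xs ! i)"
  proof (rule sqf_dvd[OF sq], intro ballI)
    fix p assume p: "p \<in> prime_factors n"
    then have pP: "p \<in> P" unfolding P_def .
    have c: "[int (a i) * int (xs ! i) = B p i * int (xs ! i)] (mod int p)" for i
      using key[OF pP, of i] by (rule cong_scalar_right)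
    have cs: "[(\<Sum>i\<in>I. int (a i) * int (xs ! i)) = (\<Sum>i\<in>I. B p i * int (xs ! i))] (mod int p)"
      by (rule cong_sum) (rule c)
    have d: "int p dvd (\<Sum>i\<in>I. B p i * int (xs ! i))" using Bs p by blast
    have "int p dvd (\<Sum>i\<in>I. int (a i) * int (xs ! i))" using cong_dvd_iff[OF cs] d by blast
    moreover have "int (\<Sum>i\<in>I. a i * xs ! i) = (\<Sum>i\<in>I. int (a i) * int (xs ! i))"
      by (simp only: of_nat_sum of_nat_mult)
    ultimately have "int p dvd int (\<Sum>i\<in>I. a i * xs ! i)" by simp
    then show "p dvd (\<Sum>i\<in>I. a i * xs ! i)" by (simp only: of_nat_dvd_iff)
  qed
  then have "(\<Sum>i\<in>I. a i * xs ! i) mod n = 0" by (simp only: dvd_eq_mod_eq_0)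
  then have "weighted_zero_sum (S_set n) n xs I" unfolding weighted_zero_sum_def
    using inS by (intro exI[of _ a] conjI ballI) auto
  then show ?thesis unfolding has_weighted_zero_subseq_def using I by (intro exI[of _ I] conjI)
qed

lemma has_take:
  assumes "has_weighted_zero_subseq A n (take k ys)"
  shows "has_weighted_zero_subseq A n ys"
proof -
  obtain I where I0: "I \<subseteq> {..<length (take k ys)}" "I \<noteq> {}" "weighted_zero_sum A n (take k ys) I"
    using assms unfolding has_weighted_zero_subseq_def by (elim exE conjE) (intro that)
  obtain a where a: "\<forall>i\<in>I. a i \<in> A" "(\<Sum>i\<in>I. a i * take k ys ! i) mod n = 0"
    using I0(3) unfolding weighted_zero_sum_def by (elim exE conjE) (intro that)
  note I = I0(1,2) a
  have eq: "(\<Sum>i\<in>I. a i * take k ys ! i) = (\<Sum>i\<in>I. a i * ys ! i)"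
    using I(1) by (intro sum.cong) auto
  have "weighted_zero_sum A n ys I" unfolding weighted_zero_sum_def
  proof (intro exI[of _ a] conjI)
    show "\<forall>i\<in>I. a i \<in> A" using I(3) .
    show "(\<Sum>i\<in>I. a i * ys ! i) mod n = 0" using I(4) eq by simp
  qed
  moreover have "I \<subseteq> {..<length ys}" using I(1) by auto
  ultimately show ?thesis unfolding has_weighted_zero_subseq_def using I(2) by (intro exI[of _ I] conjI)
qed

lemma dav_eq:
  assumes m: "m > 0"
    and good: "\<forall>xs. length xs = m \<and> set xs \<subseteq> {..<n} \<longrightarrow> has_weighted_zero_subseq A n xs"
    and bad: "length ys = m - 1" "set ys \<subseteq> {..<n}" "\<not> has_weighted_zero_subseq A n ys"
  shows "weighted_davenport A n = m"
  unfolding weighted_davenport_def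
proof (rule Least_equality)
  show "m > 0 \<and> (\<forall>xs. length xs = m \<and> set xs \<subseteq> {..<n} \<longrightarrow> has_weighted_zero_subseq A n xs)"
    using m good by blast
next
  fix k assume k: "k > 0 \<and> (\<forall>xs. length xs = k \<and> set xs \<subseteq> {..<n} \<longrightarrow> has_weighted_zero_subseq A n xs)"
  show "m \<le> k"
  proof (rule ccontr)
    assume "\<not> m \<le> k"
    then have "length (take k ys) = k" using bad(1) by simp
    moreover have "set (take k ys) \<subseteq> {..<n}" using bad(2) set_take_subset[of k ys] by (rule subset_trans[rotated])
    ultimately have "has_weighted_zero_subseq A n (take k ys)" using k by blast
    then show False using has_take bad(3) by blast
  qed
qed



lemma card2_eq:
  assumes "finite S" "card S = 2" "a \<in> S" "b \<in> S" "a \<noteq> b"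
  shows "S = {a, b}"
proof -
  obtain x z where S: "S = {x, z}" "x \<noteq> z" using assms(2) card_2_iff[of S] by auto
  then show ?thesis using assms(3-5) by auto
qed

lemma prod_pm1:
  fixes f :: "'a \<Rightarrow> int"
  assumes "finite A" "\<forall>x\<in>A. f x \<in> {-1,1}"
  shows "prod f A \<in> {-1,1}"
  using assms
proof (induction A rule: finite_induct)
  case empty then show ?case by simp
next
  case (insert x F)
  then have "f x \<in> {-1,1}" "prod f F \<in> {-1,1}" by auto
  then show ?case using insert by auto
qed

lemma upper:
  fixes n :: nat and xs :: "nat list"
  assumes sq: "squarefree n" and p7: "\<forall>p\<in>prime_factors n. p \<ge> 7"
    and k2: "card (prime_factors n) \<ge> 2"
    and len: "length xs = card (prime_factors n) + 1"
  shows "has_weighted_zero_subseq (S_set n) n xs"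
proof -
  define P where "P = prime_factors n"
  define y where "y = (\<lambda>j. int (xs ! j))"
  define D where "D = {..<length xs}"
  define supp where "supp = (\<lambda>p I. {j\<in>I. \<not> int p dvd y j})"
  have finP: "finite P" unfolding P_def by simp
  have primeP: "\<And>p. p \<in> P \<Longrightarrow> prime p" unfolding P_def by auto
  have p7': "\<And>p. p \<in> P \<Longrightarrow> 7 \<le> p" using p7 unfolding P_def by auto
  have finD: "finite D" unfolding D_def by simp
  have cardD: "card D = card P + 1" unfolding D_def P_def using len by simp
  have Pne: "P \<noteq> {}" using k2 unfolding P_def by auto
  have "\<exists>I. I \<subseteq> D \<and> I \<noteq> {} \<and> (\<forall>p\<in>P. card (supp p I) \<noteq> 1)
          \<and> \<not> (\<exists>j j'. j \<noteq> j' \<and> (\<forall>p\<in>P. supp p I = {j, j'}))"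
  proof (cases "\<exists>j\<in>D. \<forall>p\<in>P. int p dvd y j")
    case True
    then obtain j where j: "j \<in> D" "\<forall>p\<in>P. int p dvd y j" by blast
    have s: "\<forall>p\<in>P. supp p {j} = {}" using j(2) unfolding supp_def by auto
    have "\<forall>p\<in>P. card (supp p {j}) \<noteq> 1" using s by simp
    moreover have "\<not> (\<exists>j1 j2. j1 \<noteq> j2 \<and> (\<forall>p\<in>P. supp p {j} = {j1, j2}))"
      using s Pne by auto
    ultimately show ?thesis using j(1) by (intro exI[of _ "{j}"]) auto
  next
    case nz: False
    show ?thesis
    proof (cases "\<exists>u\<in>D. \<exists>v\<in>D. u \<noteq> v \<and> (\<forall>p\<in>P. \<not> int p dvd y u) \<and> (\<forall>p\<in>P. \<not> int p dvd y v)")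
      case True
      then obtain u v where uv: "u \<in> D" "v \<in> D" "u \<noteq> v" "\<forall>p\<in>P. \<not> int p dvd y u"
        "\<forall>p\<in>P. \<not> int p dvd y v" by blast
      have "card (D - {u, v}) > 0" using cardD k2 uv(1,2,3) finD unfolding P_def
        by (simp add: card_Diff_subset)
      then obtain w where w: "w \<in> D" "w \<noteq> u" "w \<noteq> v"
        by (metis Diff_iff card_gt_0_iff equals0I insertCI)
      define I where "I = {u, v, w}"
      have ID: "I \<subseteq> D" using uv w unfolding I_def by auto
      have V: "\<forall>p\<in>P. card (supp p I) \<noteq> 1"
      proof
        fix p assume p: "p \<in> P"
        have "{u, v} \<subseteq> supp p I" using uv p unfolding supp_def I_def by auto
        moreover have "finite (supp p I)" unfolding supp_def I_def by auto
        ultimately have "card {u, v} \<le> card (supp p I)" by (rule card_mono[rotated])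
        then show "card (supp p I) \<noteq> 1" using uv(3) by auto
      qed
      have NB: "\<not> (\<exists>j j'. j \<noteq> j' \<and> (\<forall>p\<in>P. supp p I = {j, j'}))"
      proof
        assume "\<exists>j j'. j \<noteq> j' \<and> (\<forall>p\<in>P. supp p I = {j, j'})"
        then obtain j j' where jj: "\<forall>p\<in>P. supp p I = {j, j'}" by blast
        obtain p where p: "p \<in> P" "\<not> int p dvd y w" using nz w(1) by blast
        have "supp p I = I" using p uv unfolding supp_def I_def by auto
        then have "card {j, j'} = 3" using jj p w uv(3) unfolding I_def by auto
        moreover have "card {j, j'} \<le> 2" by (simp add: card_insert_le_m1)
        ultimately show False by simp
      qed
      show ?thesis using ID V NB unfolding I_def by (intro exI[of _ "{u,v,w}"]) auto
    next
      case nu: False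
      obtain I where I: "I \<subseteq> D" "I \<noteq> {}" "\<forall>p\<in>P. card {j\<in>I. \<not> int p dvd y j} \<noteq> 1"
        using comb[OF finP finD, of "\<lambda>p j. \<not> int p dvd y j"] cardD by auto
      have NB: "\<not> (\<exists>j j'. j \<noteq> j' \<and> (\<forall>p\<in>P. supp p I = {j, j'}))"
      proof
        assume "\<exists>j j'. j \<noteq> j' \<and> (\<forall>p\<in>P. supp p I = {j, j'})"
        then obtain j j' where jj: "j \<noteq> j'" "\<forall>p\<in>P. supp p I = {j, j'}" by blast
        have "j \<in> I" "j' \<in> I" using jj Pne unfolding supp_def by blast+
        moreover have "\<forall>p\<in>P. \<not> int p dvd y j" "\<forall>p\<in>P. \<not> int p dvd y j'"
          using jj(2) unfolding supp_def by blast+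
        ultimately show False using nu jj(1) I(1) by blast
      qed
      show ?thesis using I NB unfolding supp_def by (intro exI[of _ I]) auto
    qed
  qed
  then obtain I where I: "I \<subseteq> D" "I \<noteq> {}" and V: "\<forall>p\<in>P. card (supp p I) \<noteq> 1"
    and NB: "\<not> (\<exists>j j'. j \<noteq> j' \<and> (\<forall>p\<in>P. supp p I = {j, j'}))"
    by (elim exE conjE) (intro that)
  have finI: "finite I" using I(1) finD finite_subset by blast
  have finS: "\<And>p. finite (supp p I)" unfolding supp_def using finI by auto
  have SI: "\<And>p. supp p I \<subseteq> I" unfolding supp_def by auto
  define J where "J = {j\<in>I. \<forall>p\<in>P. card (supp p I) = 2 \<and> j \<in> supp p I}"
  have Jone: "j = j'" if "j \<in> J" "j' \<in> J" for j j'
  proof (rule ccontr)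
    assume ne: "j \<noteq> j'"
    have "\<forall>p\<in>P. supp p I = {j, j'}"
      using that ne card2_eq[OF finS] unfolding J_def by blast
    then show False using NB ne by blast
  qed
  define E where "E = (\<lambda>p. card (supp p I) = 2)"
  define ctl where "ctl = (\<lambda>p. SOME j. j \<in> supp p I \<and> (J \<inter> supp p I \<noteq> {} \<longrightarrow> j \<in> J))"
  have ctl: "ctl p \<in> supp p I \<and> (J \<inter> supp p I \<noteq> {} \<longrightarrow> ctl p \<in> J)" if "E p" for p
  proof -
    have "\<exists>j. j \<in> supp p I \<and> (J \<inter> supp p I \<noteq> {} \<longrightarrow> j \<in> J)"
    proof (cases "J \<inter> supp p I = {}")
      case True
      have "supp p I \<noteq> {}" using that unfolding E_def by auto
      then show ?thesis using True by blast
    next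
      case False then show ?thesis by blast
    qed
    then show ?thesis unfolding ctl_def by (rule someI_ex)
  qed
  define c where "c = (\<lambda>p. Legendre (- (\<Prod>i\<in>supp p I. y i)) (int p))"
  define base where "base = (\<lambda>p j. if E p \<and> j \<in> supp p I \<and> j \<noteq> ctl p then c p else 1)"
  define q where "q = (\<lambda>j. if j \<in> J then 0 else SOME p. p \<in> P \<and> (\<not> E p \<or> j \<notin> supp p I))"
  have q: "q j \<in> P \<and> (\<not> E (q j) \<or> j \<notin> supp (q j) I)" if "j \<in> I" "j \<notin> J" for j
  proof -
    have "\<exists>p. p \<in> P \<and> (\<not> E p \<or> j \<notin> supp p I)" using that unfolding J_def E_def by blast
    then have "(SOME p. p \<in> P \<and> (\<not> E p \<or> j \<notin> supp p I)) \<in> P \<and>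
       (\<not> E (SOME p. p \<in> P \<and> (\<not> E p \<or> j \<notin> supp p I)) \<or> j \<notin> supp (SOME p. p \<in> P \<and> (\<not> E p \<or> j \<notin> supp p I)) I)"
      by (rule someI_ex)
    then show ?thesis unfolding q_def using that(2) by simp
  qed
  have q0: "q j \<notin> P" if "j \<in> J" for j
    using that primeP unfolding q_def by (metis not_prime_0)
  define \<sigma> where "\<sigma> = (\<lambda>p j. if q j = p then (\<Prod>p'\<in>P - {p}. base p' j) else base p j)"
  have c_pm: "c p \<in> {-1,1}" if "p \<in> P" for p
  proof -
    have pp: "prime (int p)" using primeP[OF that] by simp
    have "\<not> int p dvd (\<Prod>i\<in>supp p I. y i)"
      using prime_dvd_prod_iff[OF finS pp] unfolding supp_def by auto
    then have "\<not> int p dvd - (\<Prod>i\<in>supp p I. y i)" by simp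
    then show ?thesis unfolding c_def using L_pm by blast
  qed
  have base_pm: "base p j \<in> {-1,1}" if "p \<in> P" for p j
    using c_pm[OF that] unfolding base_def by auto
  have bprod_pm: "(\<Prod>p'\<in>P - {p}. base p' j) \<in> {-1,1}" for p j
    using prod_pm1[of "P - {p}" "\<lambda>p'. base p' j"] finP base_pm by auto
  have \<sigma>_pm: "\<sigma> p j \<in> {-1,1}" if "p \<in> P" for p j
    using base_pm[OF that] bprod_pm unfolding \<sigma>_def by auto
  have per: "\<exists>b. (\<forall>j\<in>I. Legendre (b j) p = \<sigma> p j) \<and> int p dvd (\<Sum>j\<in>I. b j * y j)"
    if p: "p \<in> P" for p
  proof (rule PP[OF primeP[OF p] p7'[OF p] finI])
    show "card {j\<in>I. \<not> int p dvd y j} \<noteq> 1" using V p unfolding supp_def by blast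
    show "\<forall>j\<in>I. \<sigma> p j \<in> {-1,1}" using \<sigma>_pm[OF p] by blast
    show "card {j\<in>I. \<not> int p dvd y j} = 2 \<longrightarrow>
       (\<Prod>j\<in>{j\<in>I. \<not> int p dvd y j}. \<sigma> p j) = Legendre (- (\<Prod>j\<in>{j\<in>I. \<not> int p dvd y j}. y j)) p"
    proof
      assume "card {j\<in>I. \<not> int p dvd y j} = 2"
      then have Ep: "E p" unfolding E_def supp_def .
      have notq: "q j \<noteq> p" if "j \<in> supp p I" for j
      proof (cases "j \<in> J")
        case True then show ?thesis using q0 p by metis
      next
        case False
        have "j \<in> I" using that SI by blast
        then show ?thesis using q[OF _ False] Ep that by metis
      qed
      have "(\<Prod>j\<in>supp p I. \<sigma> p j) = (\<Prod>j\<in>supp p I. base p j)"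
        using notq unfolding \<sigma>_def by (intro prod.cong) auto
      also have "\<dots> = base p (ctl p) * (\<Prod>j\<in>supp p I - {ctl p}. base p j)"
        using ctl[OF Ep] finS by (simp add: prod.remove)
      also have "\<dots> = (\<Prod>j\<in>supp p I - {ctl p}. base p j)"
        unfolding base_def by simp
      also have "\<dots> = (\<Prod>j\<in>supp p I - {ctl p}. c p)"
        by (rule prod.cong) (auto simp: base_def Ep)
      also have "\<dots> = c p"
      proof -
        have "card (supp p I - {ctl p}) = 1" using Ep ctl[OF Ep] finS unfolding E_def by simp
        then show ?thesis by simp
      qed
      finally show "(\<Prod>j\<in>{j\<in>I. \<not> int p dvd y j}. \<sigma> p j) = Legendre (- (\<Prod>j\<in>{j\<in>I. \<not> int p dvd y j}. y j)) p"
        unfolding supp_def c_def .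
    qed
  qed
  then have "\<forall>p\<in>P. \<exists>b. (\<forall>j\<in>I. Legendre (b j) p = \<sigma> p j) \<and> int p dvd (\<Sum>j\<in>I. b j * y j)"
    by blast
  then have "\<exists>B. \<forall>p\<in>P. (\<forall>j\<in>I. Legendre (B p j) p = \<sigma> p j) \<and> int p dvd (\<Sum>j\<in>I. B p j * y j)"
    by (rule bchoice)
  then obtain B where B: "\<forall>p\<in>P. (\<forall>j\<in>I. Legendre (B p j) p = \<sigma> p j) \<and> int p dvd (\<Sum>j\<in>I. B p j * y j)"
    by (elim exE) (intro that)
  show ?thesis
  proof (rule assemble[OF sq, of I xs B])
    show "I \<subseteq> {..<length xs}" using I(1) unfolding D_def .
    show "I \<noteq> {}" using I(2) .
    show "\<forall>p\<in>prime_factors n. \<forall>j\<in>I. \<not> int p dvd B p j"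
    proof (intro ballI)
      fix p j assume p: "p \<in> prime_factors n" and j: "j \<in> I"
      have pP: "p \<in> P" using p unfolding P_def .
      have "Legendre (B p j) p = \<sigma> p j" using B pP j by blast
      then have "Legendre (B p j) p \<noteq> 0" using \<sigma>_pm[OF pP, of j] by auto
      then show "\<not> int p dvd B p j" using L_zero by blast
    qed
    show "\<forall>p\<in>prime_factors n. int p dvd (\<Sum>j\<in>I. B p j * int (xs ! j))"
    proof
      fix p assume "p \<in> prime_factors n"
      then have "p \<in> P" unfolding P_def .
      then have "int p dvd (\<Sum>j\<in>I. B p j * y j)" using B by blast
      then show "int p dvd (\<Sum>j\<in>I. B p j * int (xs ! j))" unfolding y_def .
    qed
    show "\<forall>j\<in>I. (\<Prod>p\<in>prime_factors n. Legendre (B p j) (int p)) = 1"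
    proof
      fix j assume j: "j \<in> I"
      have "(\<Prod>p\<in>P. Legendre (B p j) (int p)) = (\<Prod>p\<in>P. \<sigma> p j)"
      proof (rule prod.cong)
        fix p assume "p \<in> P"
        then show "Legendre (B p j) (int p) = \<sigma> p j" using B j by blast
      qed simp
      also have "\<dots> = 1"
      proof (cases "j \<in> J")
        case True
        have "\<sigma> p j = 1" if p: "p \<in> P" for p
        proof -
          have qp: "q j \<noteq> p" using q0[OF True] p by blast
          have Ep: "E p" and js: "j \<in> supp p I" using True p unfolding J_def E_def by auto
          have "J \<inter> supp p I \<noteq> {}" using True js by blast
          then have "ctl p \<in> J" using ctl[OF Ep] by blast
          then have "ctl p = j" using Jone True by blast
          then show ?thesis using qp unfolding \<sigma>_def base_def by simp
        qed
        then show ?thesis by simp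
      next
        case False
        have qj: "q j \<in> P" using q[OF j False] by blast
        have "(\<Prod>p\<in>P. \<sigma> p j) = \<sigma> (q j) j * (\<Prod>p\<in>P - {q j}. \<sigma> p j)"
          using qj finP by (simp add: prod.remove)
        also have "\<dots> = (\<Prod>p'\<in>P - {q j}. base p' j) * (\<Prod>p\<in>P - {q j}. base p j)"
        proof -
          have "(\<Prod>p\<in>P - {q j}. \<sigma> p j) = (\<Prod>p\<in>P - {q j}. base p j)"
          proof (rule prod.cong)
            fix p assume "p \<in> P - {q j}"
            then have "q j \<noteq> p" by auto
            then show "\<sigma> p j = base p j" unfolding \<sigma>_def by simp
          qed simp
          moreover have "\<sigma> (q j) j = (\<Prod>p'\<in>P - {q j}. base p' j)" unfolding \<sigma>_def by simp
          ultimately show ?thesis by simp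
        qed
        also have "\<dots> = 1" using bprod_pm[where p="q j" and j=j] by auto
        finally show ?thesis .
      qed
      finally show "(\<Prod>p\<in>prime_factors n. Legendre (B p j) (int p)) = 1" unfolding P_def .
    qed
  qed
qed



lemma dvd_div_other:
  fixes q r n :: nat
  assumes "prime q" "prime r" "q \<noteq> r" "q dvd n" "r dvd n"
  shows "q dvd n div r"
proof -
  have "n = r * (n div r)" using assms(5) by simp
  then have "q dvd r * (n div r)" using assms(4) by metis
  then have "q dvd r \<or> q dvd n div r" using prime_dvd_mult_iff[OF assms(1)] by blast
  moreover have "\<not> q dvd r" using primes_dvd_imp_eq[OF assms(1,2)] assms(3) by blast
  ultimately show ?thesis by blast
qed

lemma get_zero_subseq:
  assumes "has_weighted_zero_subseq A n xs"
  obtains I a where "I \<subseteq> {..<length xs}" "I \<noteq> {}" "\<forall>i\<in>I. a i \<in> A"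
    "(\<Sum>i\<in>I. a i * xs ! i) mod n = 0"
proof -
  obtain I where I0: "I \<subseteq> {..<length xs}" "I \<noteq> {}" "weighted_zero_sum A n xs I"
    using assms unfolding has_weighted_zero_subseq_def by (elim exE conjE) (intro that)
  obtain a where a: "\<forall>i\<in>I. a i \<in> A" "(\<Sum>i\<in>I. a i * xs ! i) mod n = 0"
    using I0(3) unfolding weighted_zero_sum_def by (elim exE conjE) (intro that)
  show ?thesis by (rule that[OF I0(1,2) a(1,2)])
qed

lemma lower:
  fixes n :: nat
  assumes sq: "squarefree n"
  shows "length (map (\<lambda>q. n div q) (sorted_list_of_set (prime_factors n))) = card (prime_factors n)
    \<and> set (map (\<lambda>q. n div q) (sorted_list_of_set (prime_factors n))) \<subseteq> {..<n}
    \<and> \<not> has_weighted_zero_subseq (S_set n) n (map (\<lambda>q. n div q) (sorted_list_of_set (prime_factors n)))"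
proof -
  define P where "P = prime_factors n"
  define ps where "ps = sorted_list_of_set P"
  define xs where "xs = map (\<lambda>q. n div q) ps"
  have n0: "n \<noteq> 0" using sq by (metis not_squarefree_0)
  have finP: "finite P" unfolding P_def by simp
  have dps: "distinct ps" unfolding ps_def by simp
  have sps: "set ps = P" unfolding ps_def using finP by simp
  have lps: "length ps = card P" unfolding ps_def by simp
  have primeP: "\<And>p. p \<in> P \<Longrightarrow> prime p" unfolding P_def by auto
  have dvdP: "\<And>p. p \<in> P \<Longrightarrow> p dvd n" unfolding P_def by auto
  have len: "length xs = card P" unfolding xs_def using lps by simp
  have sub: "set xs \<subseteq> {..<n}"
  proof
    fix x assume "x \<in> set xs"
    then obtain q where q: "q \<in> P" "x = n div q" unfolding xs_def using sps by auto
    have "1 < q" using primeP[OF q(1)] prime_gt_1_nat by blast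
    then have "n div q < n" using n0 by simp
    then show "x \<in> {..<n}" using q by simp
  qed
  have nh: "\<not> has_weighted_zero_subseq (S_set n) n xs"
  proof
    assume "has_weighted_zero_subseq (S_set n) n xs"
    then obtain I a where I: "I \<subseteq> {..<length xs}" "I \<noteq> {}" "\<forall>i\<in>I. a i \<in> S_set n"
      "(\<Sum>i\<in>I. a i * xs ! i) mod n = 0" by (rule get_zero_subseq)
    obtain j where j: "j \<in> I" using I(2) by blast
    have jl: "j < length ps" using j I(1) len lps by auto
    define q where "q = ps ! j"
    have qP: "q \<in> P" unfolding q_def using jl sps nth_mem by blast
    have qp: "prime q" using primeP[OF qP] .
    have finI: "finite I" using I(1) finite_subset by blast
    have "n dvd (\<Sum>i\<in>I. a i * xs ! i)" using I(4) by (simp add: dvd_eq_mod_eq_0)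
    then have qs: "q dvd (\<Sum>i\<in>I. a i * xs ! i)" by (rule dvd_trans[OF dvdP[OF qP]])
    have split: "(\<Sum>i\<in>I. a i * xs ! i) = a j * xs ! j + (\<Sum>i\<in>I - {j}. a i * xs ! i)"
      using finI j by (simp add: sum.remove)
    have rest: "q dvd (\<Sum>i\<in>I - {j}. a i * xs ! i)"
    proof (rule dvd_sum)
      fix i assume i: "i \<in> I - {j}"
      have il: "i < length ps" using i I(1) len lps by auto
      have ne: "ps ! i \<noteq> q" unfolding q_def using i il jl dps nth_eq_iff_index_eq by auto
      have riP: "ps ! i \<in> P" using il sps nth_mem by blast
      have "q dvd n div (ps ! i)"
        using dvd_div_other[OF qp primeP[OF riP] ne[symmetric] dvdP[OF qP] dvdP[OF riP]] .
      moreover have "xs ! i = n div (ps ! i)" unfolding xs_def using il by simp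
      ultimately show "q dvd a i * xs ! i" by simp
    qed
    have "q dvd a j * xs ! j" using qs rest unfolding split by (simp add: dvd_add_left_iff)
    moreover have "xs ! j = n div q" unfolding xs_def q_def using jl by simp
    ultimately have "q dvd a j * (n div q)" by simp
    then have "q dvd a j \<or> q dvd n div q" using prime_dvd_mult_iff[OF qp] by blast
    moreover have "\<not> q dvd a j"
    proof
      assume "q dvd a j"
      moreover have "coprime (a j) n" using I(3) j unfolding S_set_def by blast
      ultimately have "is_unit q" using coprime_common_divisor[of "a j" n q] dvdP[OF qP] by blast
      then show False using qp by simp
    qed
    moreover have "\<not> q dvd n div q"
    proof
      assume "q dvd n div q"
      then obtain t where t: "n div q = q * t" by blast
      have "n = q * (n div q)" using dvdP[OF qP] by simp
      then have "n = q^2 * t" using t by (simp add: power2_eq_square)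
      then have "q^2 dvd n" by simp
      then have "q dvd 1" using squarefreeD[OF sq] by blast
      then show False using qp by simp
    qed
    ultimately show False by blast
  qed
  have "length xs = card P \<and> set xs \<subseteq> {..<n} \<and> \<not> has_weighted_zero_subseq (S_set n) n xs"
    using len sub nh by (intro conjI)
  then show ?thesis unfolding xs_def ps_def P_def .
qed

lemma Omega1_prime:
  fixes n :: nat
  assumes "n > 0" "Omega n = 1"
  shows "prime n"
proof -
  define P where "P = prime_factors n"
  have finP: "finite P" unfolding P_def by simp
  have m1: "\<And>p. p \<in> P \<Longrightarrow> multiplicity p n \<ge> 1"
  proof -
    fix p assume p: "p \<in> P"
    then have "prime p" "p dvd n" unfolding P_def by auto
    then show "multiplicity p n \<ge> 1"
      using multiplicity_gt_zero_iff[of n p] assms(1) prime_gt_1_nat by fastforce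
  qed
  have "card P = (\<Sum>p\<in>P. 1)" by simp
  also have "\<dots> \<le> (\<Sum>p\<in>P. multiplicity p n)" using m1 by (intro sum_mono) auto
  also have "\<dots> = 1" using assms(2) unfolding Omega_def P_def by simp
  finally have c1: "card P \<le> 1" .
  have "P \<noteq> {}"
  proof
    assume "P = {}"
    then have "Omega n = 0" unfolding Omega_def P_def by simp
    then show False using assms(2) by simp
  qed
  then have "card P = 1" using c1 finP card_0_eq[OF finP] by linarith
  then obtain p where Pp: "P = {p}" using card_1_singletonE by blast
  have mp: "multiplicity p n = 1" using assms(2) Pp unfolding Omega_def P_def by simp
  have "n = (\<Prod>p\<in>prime_factors n. p ^ multiplicity p n)" using prime_factorization_nat assms(1) by blast
  also have "\<dots> = p" using Pp mp unfolding P_def by simp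
  finally have "n = p" .
  moreover have "prime p" using Pp unfolding P_def by auto
  ultimately show ?thesis by simp
qed

lemma S_prime:
  fixes p a :: nat
  assumes "prime p"
  shows "a \<in> S_set p \<longleftrightarrow> a < p \<and> coprime a p \<and> Legendre (int a) (int p) = 1"
proof -
  have "multiplicity p p = 1" using assms by (intro multiplicity_self) auto
  then have "Jacobi a p = Legendre (int a) (int p)"
    unfolding Jacobi_def using prime_prime_factors[OF assms] by simp
  then show ?thesis unfolding S_set_def by simp
qed



lemma L_neg:
  fixes p :: nat and x y :: int
  assumes "prime p" "2 < p"
  shows "Legendre (- (x * y)) p = Legendre (-1) p * Legendre x p * Legendre y p"
proof -
  have "- (x * y) = (-1) * x * y" by simp
  then have "Legendre (- (x * y)) p = Legendre ((-1) * x * y) p" by simp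
  also have "\<dots> = Legendre (-1) p * Legendre x p * Legendre y p" by (simp only: L_mult[OF assms])
  finally show ?thesis .
qed

lemma part1_good:
  fixes p :: nat and xs :: "nat list"
  assumes p: "prime p" "2 < p" and len: "length xs = 3"
  shows "has_weighted_zero_subseq (S_set p) p xs"
proof -
  define y where "y = (\<lambda>j. int (xs ! j))"
  have pf: "prime_factors p = {p}" using prime_prime_factors[OF p(1)] .
  have sq: "squarefree p" using squarefree_prime[OF p(1)] .
  have L1: "Legendre 1 p = 1" using L_one p by simp
  have main: "\<exists>I b. I \<subseteq> {..<length xs} \<and> I \<noteq> {} \<and> (\<forall>j\<in>I. Legendre (b j) p = 1)
      \<and> int p dvd (\<Sum>j\<in>I. b j * y j)"
  proof (cases "\<exists>j<3. int p dvd y j")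
    case True
    then obtain j where j: "j < 3" "int p dvd y j" by blast
    have "{j} \<subseteq> {..<length xs}" using j len by auto
    moreover have "int p dvd (\<Sum>i\<in>{j}. (\<lambda>_. 1) i * y i)" using j by simp
    ultimately show ?thesis using L1 by (intro exI[of _ "{j}"] exI[of _ "\<lambda>_. 1"]) auto
  next
    case nz: False
    have ny: "\<And>j. j < 3 \<Longrightarrow> \<not> int p dvd y j" using nz by blast
    have ly: "\<And>j. j < 3 \<Longrightarrow> Legendre (y j) p = 1 \<or> Legendre (y j) p = -1" using ny L_pm by blast
    have m1: "Legendre (-1) p = 1 \<or> Legendre (-1) p = -1"
      using L_pm[of p "-1"] p prime_gt_1_nat by auto
    show ?thesis
    proof (cases "\<exists>i<3. \<exists>j<3. i \<noteq> j \<and> Legendre (- (y i * y j)) p = 1")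
      case True
      then obtain i j where ij: "i < 3" "j < 3" "i \<noteq> j" "Legendre (- (y i * y j)) p = 1" by blast
      obtain iv where iv: "[y j * iv = 1] (mod int p)" "Legendre iv p = Legendre (y j) p"
        using L_inv[OF p ny[OF ij(2)]] by blast
      define b where "b = (\<lambda>k. if k = j then - (y i * iv) else 1)"
      have "Legendre (b j) p = Legendre (-1) p * Legendre (y i) p * Legendre iv p"
        unfolding b_def using L_neg[OF p] by simp
      also have "\<dots> = Legendre (- (y i * y j)) p" using L_neg[OF p] iv(2) by simp
      finally have Lbj: "Legendre (b j) p = 1" using ij(4) by simp
      have Lb: "\<forall>k\<in>{i,j}. Legendre (b k) p = 1" using Lbj L1 unfolding b_def by auto
      have "(\<Sum>k\<in>{i,j}. b k * y k) = (- (y i)) * (y j * iv - 1)"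
        unfolding b_def using ij(3) by (simp add: algebra_simps)
      moreover have "int p dvd (y j * iv - 1)" using iv(1) by (simp add: cong_iff_dvd_diff)
      ultimately have "int p dvd (\<Sum>k\<in>{i,j}. b k * y k)" by simp
      moreover have "{i,j} \<subseteq> {..<length xs}" using ij len by auto
      ultimately show ?thesis using Lb by (intro exI[of _ "{i,j}"] exI[of _ b]) auto
    next
      case False
      have neg: "Legendre (- (y i * y j)) p = -1" if "i < 3" "j < 3" "i \<noteq> j" for i j
      proof -
        have "\<not> int p dvd y i * y j" using ny that prime_dvd_mult_iff[of "int p"] p(1) by auto
        then have "\<not> int p dvd - (y i * y j)" by simp
        then show ?thesis using L_pm False that by blast
      qed
      have e01: "Legendre (-1) p * Legendre (y 0) p * Legendre (y 1) p = -1" using neg[of 0 1] L_neg[OF p] by simp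
      have e02: "Legendre (-1) p * Legendre (y 0) p * Legendre (y 2) p = -1" using neg[of 0 2] L_neg[OF p] by simp
      have e12: "Legendre (-1) p * Legendre (y 1) p * Legendre (y 2) p = -1" using neg[of 1 2] L_neg[OF p] by simp
      have l0: "Legendre (y 0) p = 1 \<or> Legendre (y 0) p = -1" using ly by simp
      have l1: "Legendre (y 1) p = 1 \<or> Legendre (y 1) p = -1" using ly by simp
      have l2: "Legendre (y 2) p = 1 \<or> Legendre (y 2) p = -1" using ly by simp
      have mm: "Legendre (-1) p = -1" using e01 e02 e12 l0 l1 l2 m1 by auto
      have p01: "Legendre (y 0) p * Legendre (y 1) p = 1" using e01 mm by simp
      have p02: "Legendre (y 0) p * Legendre (y 2) p = 1" using e02 mm by simp
      obtain r where r: "Legendre r p = 1" "Legendre (r+1) p = -1" using F2[OF p] by blast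
      obtain i1 where i1: "[y 1 * i1 = 1] (mod int p)" "Legendre i1 p = Legendre (y 1) p"
        using L_inv[OF p ny[of 1]] by auto
      obtain i2 where i2: "[y 2 * i2 = 1] (mod int p)" "Legendre i2 p = Legendre (y 2) p"
        using L_inv[OF p ny[of 2]] by auto
      define b where "b = (\<lambda>k::nat. if k = 1 then r * y 0 * i1 else if k = 2 then (-1) * (r+1) * y 0 * i2 else 1)"
      have Lb1: "Legendre (b 1) p = 1"
      proof -
        have e: "b 1 = r * y 0 * i1" unfolding b_def by simp
        have "Legendre (b 1) p = Legendre r p * Legendre (y 0) p * Legendre i1 p"
          unfolding e by (simp only: L_mult[OF p])
        then show ?thesis using r i1(2) p01 by simp
      qed
      have Lb2: "Legendre (b 2) p = 1"
      proof -
        have e: "b 2 = (-1) * (r+1) * y 0 * i2" unfolding b_def by simp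
        have "Legendre (b 2) p = Legendre (-1) p * Legendre (r+1) p * Legendre (y 0) p * Legendre i2 p"
          unfolding e by (simp only: L_mult[OF p])
        then show ?thesis using r i2(2) p02 mm by simp
      qed
      have Lb: "\<forall>k\<in>{0,1,2}. Legendre (b k) p = 1" using Lb1 Lb2 L1 unfolding b_def by auto
      have "(\<Sum>k\<in>{0,1,2::nat}. b k * y k) = r * y 0 * (y 1 * i1 - 1) - (r+1) * y 0 * (y 2 * i2 - 1)"
        unfolding b_def by (simp add: algebra_simps)
      moreover have "int p dvd (y 1 * i1 - 1)" using i1(1) by (simp add: cong_iff_dvd_diff)
      moreover have "int p dvd (y 2 * i2 - 1)" using i2(1) by (simp add: cong_iff_dvd_diff)
      ultimately have "int p dvd (\<Sum>k\<in>{0,1,2::nat}. b k * y k)" by simp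
      moreover have "{0,1,2::nat} \<subseteq> {..<length xs}" using len by auto
      ultimately show ?thesis using Lb by (intro exI[of _ "{0,1,2::nat}"] exI[of _ b]) auto
    qed
  qed
  then obtain I b where I: "I \<subseteq> {..<length xs}" "I \<noteq> {}" "\<forall>j\<in>I. Legendre (b j) p = 1"
    "int p dvd (\<Sum>j\<in>I. b j * y j)" by (elim exE conjE) (intro that)
  show ?thesis
  proof (rule assemble[OF sq I(1,2), of "\<lambda>_. b"])
    show "\<forall>q\<in>prime_factors p. \<forall>j\<in>I. \<not> int q dvd b j"
    proof (intro ballI)
      fix q j assume q: "q \<in> prime_factors p" and j: "j \<in> I"
      have qp: "q = p" using q unfolding pf by simp
      have "Legendre (b j) p \<noteq> 0" using I(3) j by simp
      then show "\<not> int q dvd b j" unfolding qp using L_zero by blast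
    qed
    show "\<forall>q\<in>prime_factors p. int q dvd (\<Sum>j\<in>I. b j * int (xs ! j))"
      using I(4) unfolding pf y_def by simp
    show "\<forall>j\<in>I. (\<Prod>q\<in>prime_factors p. Legendre (b j) (int q)) = 1"
      using I(3) unfolding pf by simp
  qed
qed

lemma part1_bad:
  fixes p :: nat
  assumes p: "prime p" "2 < p"
  shows "\<exists>ys. length ys = 2 \<and> set ys \<subseteq> {..<p} \<and> \<not> has_weighted_zero_subseq (S_set p) p ys"
proof -
  obtain g0 where g0: "Legendre g0 p = -1" using L_nonres[OF p] by blast
  define g where "g = nat (g0 mod int p)"
  have g: "Legendre (int g) p = -1" "g < p" using L_mod_nat[of p g0] g0 p unfolding g_def by auto
  have g0': "g \<noteq> 0"
  proof
    assume "g = 0" then show False using g(1) L_zero[of 0 p] by simp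
  qed
  define ys where "ys = [1, p - g]"
  have pp: "prime (int p)" using p(1) by simp
  have S: "\<And>a. a \<in> S_set p \<Longrightarrow> Legendre (int a) p = 1" using S_prime[OF p(1)] by blast
  have Snd: "\<not> int p dvd int a" if "a \<in> S_set p" for a
  proof -
    have "Legendre (int a) p \<noteq> 0" using S[OF that] by simp
    then show ?thesis using L_zero by blast
  qed
  have nh: "\<not> has_weighted_zero_subseq (S_set p) p ys"
  proof
    assume "has_weighted_zero_subseq (S_set p) p ys"
    then obtain I a where I: "I \<subseteq> {..<length ys}" "I \<noteq> {}" "\<forall>i\<in>I. a i \<in> S_set p"
      "(\<Sum>i\<in>I. a i * ys ! i) mod p = 0" by (rule get_zero_subseq)
    have "p dvd (\<Sum>i\<in>I. a i * ys ! i)" using I(4) by (simp add: dvd_eq_mod_eq_0)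
    then have d: "int p dvd int (\<Sum>i\<in>I. a i * ys ! i)" by (simp only: of_nat_dvd_iff)
    have I2: "I \<subseteq> {0,1}" using I(1) unfolding ys_def by auto
    have ndg: "\<not> int p dvd int (p - g)"
      using L_natlt[of "p - g" p] g(2) g0' by simp
    show False
    proof (cases "0 \<in> I")
      case True
      note a0 = Snd[OF I(3)[rule_format, OF True]]
      show ?thesis
      proof (cases "1 \<in> I")
        case True
        have II: "I = {0,1}" using I2 \<open>0 \<in> I\<close> True by auto
        note a1 = Snd[OF I(3)[rule_format, OF True]]
        have "int (\<Sum>i\<in>I. a i * ys ! i) = int (a 0) + int (a 1) * (int p - int g)"
          unfolding II ys_def using g(2) by (simp add: of_nat_diff)
        also have "\<dots> = (int (a 0) - int (a 1) * int g) + int p * int (a 1)" by (simp add: algebra_simps)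
        finally have eqs: "int (\<Sum>i\<in>I. a i * ys ! i) = (int (a 0) - int (a 1) * int g) + int p * int (a 1)" .
        have "int p dvd (int (a 0) - int (a 1) * int g) + int p * int (a 1)" using d unfolding eqs .
        then have "int p dvd (int (a 0) - int (a 1) * int g)" using dvd_add_left_iff[of "int p" "int p * int (a 1)"] by simp
        then have "[int (a 0) = int (a 1) * int g] (mod int p)" by (simp add: cong_iff_dvd_diff)
        then have "Legendre (int (a 0)) p = Legendre (int (a 1) * int g) p" by (rule L_cong)
        then have "Legendre (int (a 0)) p = Legendre (int (a 1)) p * Legendre (int g) p"
          using L_mult[OF p] by simp
        moreover have "Legendre (int (a 0)) p = 1" using S I(3) \<open>0 \<in> I\<close> by blast
        moreover have "Legendre (int (a 1)) p = 1" using S I(3) True by blast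
        ultimately show False using g(1) by simp
      next
        case False
        have II: "I = {0}" using I2 \<open>0 \<in> I\<close> False by auto
        have "int (\<Sum>i\<in>I. a i * ys ! i) = int (a 0)" unfolding II ys_def by simp
        then show False using d a0 by simp
      qed
    next
      case False
      have II: "I = {1}" using I2 I(2) False by auto
      have "1 \<in> I" using II by simp
      note a1 = Snd[OF I(3)[rule_format, OF this]]
      have "int (\<Sum>i\<in>I. a i * ys ! i) = int (a 1) * int (p - g)" unfolding II ys_def by simp
      then have "int p dvd int (a 1) * int (p - g)" using d by simp
      then show False using a1 ndg prime_dvd_mult_iff[OF pp] by blast
    qed
  qed
  have "set ys \<subseteq> {..<p}" unfolding ys_def using p g0' by auto
  moreover have "length ys = 2" unfolding ys_def by simp
  ultimately show ?thesis using nh by blast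
qed

theorem theorem2p11:
  fixes n :: nat
  assumes "odd n" and "n > 0"
  shows "(Omega n = 1 \<longrightarrow> weighted_davenport (S_set n) n = 3)
       \<and> (squarefree n \<and> (\<forall>p\<in>prime_factors n. p \<ge> 7) \<and> Omega n \<ge> 2
            \<longrightarrow> weighted_davenport (S_set n) n = Omega n + 1)"
proof (intro conjI impI)
  assume O1: "Omega n = 1"
  have pn: "prime n" using Omega1_prime[OF assms(2) O1] .
  have n2: "2 < n"
  proof -
    have "n \<noteq> 2" using assms(1) by auto
    moreover have "n \<ge> 2" using pn prime_ge_2_nat by blast
    ultimately show ?thesis by simp
  qed
  obtain ys where ys: "length ys = 2" "set ys \<subseteq> {..<n}" "\<not> has_weighted_zero_subseq (S_set n) n ys"
    using part1_bad[OF pn n2] by blast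
  show "weighted_davenport (S_set n) n = 3"
  proof (rule dav_eq)
    show "\<forall>xs. length xs = 3 \<and> set xs \<subseteq> {..<n} \<longrightarrow> has_weighted_zero_subseq (S_set n) n xs"
      using part1_good[OF pn n2] by blast
  qed (use ys in auto)
next
  assume H: "squarefree n \<and> (\<forall>p\<in>prime_factors n. p \<ge> 7) \<and> Omega n \<ge> 2"
  then have sq: "squarefree n" and p7: "\<forall>p\<in>prime_factors n. p \<ge> 7" and O2: "Omega n \<ge> 2" by auto
  have OC: "Omega n = card (prime_factors n)" using Omega_sqf[OF sq] .
  have k2: "card (prime_factors n) \<ge> 2" using O2 OC by simp
  note lo = lower[OF sq]
  show "weighted_davenport (S_set n) n = Omega n + 1"
    unfolding OC
  proof (rule dav_eq[where ys = "map (\<lambda>q. n div q) (sorted_list_of_set (prime_factors n))"])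
    show "\<forall>xs. length xs = card (prime_factors n) + 1 \<and> set xs \<subseteq> {..<n} \<longrightarrow> has_weighted_zero_subseq (S_set n) n xs"
      using upper[OF sq p7 k2] by blast
  qed (use lo in auto)
qed


end
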